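(* Let $\Omega\subset\mathbb{R}^2$ be open, $\lambda>0$, and let $u\in L^2(\Omega)$ satisfy $-\Delta u=\lambda u$ in $\Omega$. Suppose $\Gamma^+,\Gamma^-\subset\Omega$ are two singular lines of $u$ with $\Gamma^+\cap\Gamma^-=\{\mathbf{x}_0\}$, $\mathbf{x}_0\in\Omega$, forming at $\mathbf{x}_0$ the angle $\angle(\Gamma^+,\Gamma^-)=\alpha\cdot 2\pi$, where $\alpha\in(0,1)$ is irrational. Then $\mathrm{Vani}(u;\mathbf{x}_0)=0$ if $u(\mathbf{x}_0)\neq 0$, and $\mathrm{Vani}(u;\mathbf{x}_0)=+\infty$ if $u(\mathbf{x}_0)=0$. Moreover, if $u(\mathbf{x}_0)\neq0$, then in a neighborhood of $\mathbf{x}_0$ one has $u(\mathbf{x})=u(\mathbf{x}_0)J_0(\sqrt{\lambda}\,r)$ for $\mathbf{x}=\mathbf{x}_0+r(\cos\theta,\sin\theta)$, where $J_0$ is the Bessel function of the first kind of order zero.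
   Context: No boundary condition is imposed on $\partial\Omega$; $u$ is real-analytic in $\Omega$. A line segment $\Gamma\subset\Omega$ is a singular line of $u$ if $\partial_\nu u=0$ on $\Gamma$, where $\nu$ is a unit normal vector to $\Gamma$. Vanishing order: writing $u(\mathbf{x}_0+\mathbf{y})=\sum_{m\ge0}P_m(\mathbf{y})$ with $P_m$ homogeneous of degree $m$, $\mathrm{Vani}(u;\mathbf{x}_0)$ is the smallest $m$ with $P_m\not\equiv0$ ($+\infty$ if none). *)

theory Defs
  imports "HOL-Analysis.Analysis" "HOL-Library.Extended_Nat"
begin

definition hom_part :: "(nat \<Rightarrow> nat \<Rightarrow> real) \<Rightarrow> nat \<Rightarrow> real \<times> real \<Rightarrow> real" where
  "hom_part c m y = (\<Sum>j\<le>m. c m j * fst y ^ j * snd y ^ (m - j))"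

definition power_expansion_at ::
  "(real \<times> real \<Rightarrow> real) \<Rightarrow> real \<times> real \<Rightarrow> (nat \<Rightarrow> nat \<Rightarrow> real) \<Rightarrow> real \<Rightarrow> bool" where
  "power_expansion_at u x0 c r \<longleftrightarrow> r > 0 \<and>
     (\<forall>y. norm y < r \<longrightarrow>
        summable (\<lambda>m. \<Sum>j\<le>m. \<bar>c m j\<bar> * \<bar>fst y\<bar> ^ j * \<bar>snd y\<bar> ^ (m - j)) \<and>
        (\<lambda>m. hom_part c m y) sums u (x0 + y))"

definition real_analytic_on :: "(real \<times> real) set \<Rightarrow> (real \<times> real \<Rightarrow> real) \<Rightarrow> bool" where
  "real_analytic_on \<Omega> u \<longleftrightarrow> (\<forall>x0\<in>\<Omega>. \<exists>c r. power_expansion_at u x0 c r)"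

definition vani :: "(real \<times> real \<Rightarrow> real) \<Rightarrow> real \<times> real \<Rightarrow> enat" where
  "vani u x0 = (let c = (SOME c. \<exists>r. power_expansion_at u x0 c r) in
      if \<exists>m y. hom_part c m y \<noteq> 0
      then enat (LEAST m. \<exists>y. hom_part c m y \<noteq> 0) else \<infinity>)"

definition partial1 :: "(real \<times> real \<Rightarrow> real) \<Rightarrow> real \<times> real \<Rightarrow> real" where
  "partial1 u x = deriv (\<lambda>t. u (t, snd x)) (fst x)"

definition partial2 :: "(real \<times> real \<Rightarrow> real) \<Rightarrow> real \<times> real \<Rightarrow> real" where
  "partial2 u x = deriv (\<lambda>t. u (fst x, t)) (snd x)"

definition laplacian :: "(real \<times> real \<Rightarrow> real) \<Rightarrow> real \<times> real \<Rightarrow> real" where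
  "laplacian u x = partial1 (partial1 u) x + partial2 (partial2 u) x"

definition dir_deriv :: "(real \<times> real \<Rightarrow> real) \<Rightarrow> real \<times> real \<Rightarrow> real \<times> real \<Rightarrow> real" where
  "dir_deriv u x v = deriv (\<lambda>t. u (x + t *\<^sub>R v)) 0"

definition singular_line ::
  "(real \<times> real) set \<Rightarrow> (real \<times> real \<Rightarrow> real) \<Rightarrow> (real \<times> real) set \<Rightarrow> bool" where
  "singular_line \<Omega> u \<Gamma> \<longleftrightarrow> (\<exists>a b. a \<noteq> b \<and> \<Gamma> = closed_segment a b \<and> \<Gamma> \<subseteq> \<Omega> \<and>
     (let \<nu> = (1 / norm (b - a)) *\<^sub>R (- snd (b - a), fst (b - a)) in
       \<forall>x\<in>\<Gamma>. dir_deriv u x \<nu> = 0))"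

definition bessel_J0 :: "real \<Rightarrow> real" where
  "bessel_J0 x = (\<Sum>m. (-1) ^ m / (fact m)^2 * (x / 2) ^ (2 * m))"

end

theory Submission imports Defs begin

definition D1 :: "(nat \<Rightarrow> nat \<Rightarrow> real) \<Rightarrow> nat \<Rightarrow> nat \<Rightarrow> real" where
  "D1 c m j = real (Suc j) * c (Suc m) (Suc j)"
definition D2 :: "(nat \<Rightarrow> nat \<Rightarrow> real) \<Rightarrow> nat \<Rightarrow> nat \<Rightarrow> real" where
  "D2 c m j = real (Suc m - j) * c (Suc m) j"
definition Cn :: "(nat \<Rightarrow> nat \<Rightarrow> real) \<Rightarrow> nat \<Rightarrow> real" where
  "Cn c m = (\<Sum>j\<le>m. \<bar>c m j\<bar>)"
definition AC :: "(nat \<Rightarrow> nat \<Rightarrow> real) \<Rightarrow> real \<Rightarrow> bool" where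
  "AC c s \<longleftrightarrow> summable (\<lambda>m. Cn c m * s ^ m)"
definition U :: "(nat \<Rightarrow> nat \<Rightarrow> real) \<Rightarrow> real \<times> real \<Rightarrow> real" where
  "U c y = (\<Sum>m. hom_part c m y)"

lemma hom_homog: "hom_part c m (t * a, t * b) = t ^ m * hom_part c m (a, b)"
  unfolding hom_part_def sum_distrib_left
proof (rule sum.cong[OF refl])
  fix j assume "j \<in> {..m}"
  then have "t ^ j * t ^ (m - j) = t ^ m" by (simp add: power_add[symmetric])
  then show "c m j * fst (t * a, t * b) ^ j * snd (t * a, t * b) ^ (m - j) =
        t ^ m * (c m j * fst (a, b) ^ j * snd (a, b) ^ (m - j))"
    by (simp add: power_mult_distrib algebra_simps)
qed

lemma hom_bound:
  assumes "\<bar>fst y\<bar> \<le> s" "\<bar>snd y\<bar> \<le> s"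
  shows "\<bar>hom_part c m y\<bar> \<le> Cn c m * s ^ m"
proof -
  have "\<bar>hom_part c m y\<bar> \<le> (\<Sum>j\<le>m. \<bar>c m j * fst y ^ j * snd y ^ (m - j)\<bar>)"
    unfolding hom_part_def by (rule sum_abs)
  also have "\<dots> \<le> (\<Sum>j\<le>m. \<bar>c m j\<bar> * s ^ m)"
  proof (rule sum_mono)
    fix j assume j: "j \<in> {..m}"
    have "\<bar>fst y ^ j\<bar> \<le> s ^ j" unfolding power_abs by (rule power_mono) (use assms in auto)
    moreover have "\<bar>snd y ^ (m-j)\<bar> \<le> s ^ (m-j)" unfolding power_abs by (rule power_mono) (use assms in auto)
    ultimately have "\<bar>fst y ^ j\<bar> * \<bar>snd y ^ (m-j)\<bar> \<le> s ^ j * s ^ (m - j)"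
      by (intro mult_mono) auto
    also have "\<dots> = s ^ m" using j by (simp add: power_add[symmetric])
    finally show "\<bar>c m j * fst y ^ j * snd y ^ (m - j)\<bar> \<le> \<bar>c m j\<bar> * s ^ m"
      by (simp add: abs_mult mult.assoc mult_left_mono)
  qed
  also have "\<dots> = Cn c m * s ^ m" by (simp add: Cn_def sum_distrib_right)
  finally show ?thesis .
qed

lemma hom_deriv:
  "(hom_part c (Suc m) has_derivative
     (\<lambda>h. hom_part (D1 c) m y * fst h + hom_part (D2 c) m y * snd h)) (at y)"
proof -
  have d: "((\<lambda>y. c (Suc m) j * fst y ^ j * snd y ^ (Suc m - j)) has_derivative
     (\<lambda>h. c (Suc m) j * (real j * fst y ^ (j - 1) * fst h) * snd y ^ (Suc m - j) +
          c (Suc m) j * fst y ^ j * (real (Suc m - j) * snd y ^ (Suc m - j - 1) * snd h))) (at y)" for j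
    by (auto intro!: derivative_eq_intros simp: algebra_simps)
  have s1: "(\<Sum>j\<le>Suc m. c (Suc m) j * (real j * fst y ^ (j - 1) * a) * snd y ^ (Suc m - j))
      = hom_part (D1 c) m y * a" for a
    unfolding hom_part_def D1_def sum.atMost_Suc_shift sum_distrib_right
    by (auto intro!: sum.cong simp: algebra_simps)
  have s2: "(\<Sum>j\<le>Suc m. c (Suc m) j * fst y ^ j * (real (Suc m - j) * snd y ^ (Suc m - j - 1) * a))
      = hom_part (D2 c) m y * a" for a
    unfolding hom_part_def D2_def sum.atMost_Suc sum_distrib_right
    by (auto intro!: sum.cong simp: algebra_simps Suc_diff_le)
  show ?thesis
    unfolding hom_part_def[of c "Suc m", abs_def]
    apply (rule has_derivative_eq_rhs)
     apply (rule has_derivative_sum[OF d])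
    apply (rule ext)
    apply (simp only: sum.distrib s1 s2)
    done
qed

lemma fst_le_norm: "\<bar>fst (y::real\<times>real)\<bar> \<le> norm y"
  by (metis norm_fst_le prod.collapse real_norm_def)
lemma snd_le_norm: "\<bar>snd (y::real\<times>real)\<bar> \<le> norm y"
  by (metis norm_snd_le prod.collapse real_norm_def)

lemma Cn_nonneg: "Cn c m \<ge> 0"
  unfolding Cn_def by (auto intro: sum_nonneg)

lemma AC_mono: assumes "AC c s" "0 \<le> t" "t \<le> s" shows "AC c t"
  using assms unfolding AC_def
  by (rule_tac summable_comparison_test[OF _ assms(1)[unfolded AC_def]])
     (auto intro!: exI[of _ 0] mult_left_mono power_mono Cn_nonneg simp: Cn_nonneg)

lemma AC_diffs:
  assumes "AC c s" "0 \<le> t" "t < s"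
  shows "summable (\<lambda>m. real (Suc m) * Cn c (Suc m) * t ^ m)"
proof -
  have "summable (\<lambda>n. diffs (Cn c) n * t ^ n)"
  proof (rule termdiff_converges[of t s])
    show "norm t < s" using assms by simp
    fix x :: real assume x: "norm x < s"
    have "summable (\<lambda>n. norm (Cn c n * x ^ n))"
      by (rule powser_insidea[of _ s]) (use assms x in \<open>auto simp: AC_def\<close>)
    then show "summable (\<lambda>n. Cn c n * x ^ n)" by (rule summable_norm_cancel)
  qed
  then show ?thesis by (simp add: diffs_def)
qed

lemma Cn_D1: "Cn (D1 c) m \<le> real (Suc m) * Cn c (Suc m)"
proof -
  have "Cn (D1 c) m = (\<Sum>j\<le>m. real (Suc j) * \<bar>c (Suc m) (Suc j)\<bar>)"
    unfolding Cn_def D1_def by (simp add: abs_mult)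
  also have "\<dots> \<le> (\<Sum>j\<le>m. real (Suc m) * \<bar>c (Suc m) (Suc j)\<bar>)"
    by (rule sum_mono) (auto intro: mult_right_mono)
  also have "\<dots> \<le> real (Suc m) * Cn c (Suc m)"
    unfolding Cn_def sum.atMost_Suc_shift sum_distrib_left[symmetric] by (simp add: distrib_left)
  finally show ?thesis .
qed

lemma Cn_D2: "Cn (D2 c) m \<le> real (Suc m) * Cn c (Suc m)"
proof -
  have "Cn (D2 c) m = (\<Sum>j\<le>m. real (Suc m - j) * \<bar>c (Suc m) j\<bar>)"
    unfolding Cn_def D2_def by (simp add: abs_mult)
  also have "\<dots> \<le> (\<Sum>j\<le>m. real (Suc m) * \<bar>c (Suc m) j\<bar>)"
    by (rule sum_mono) (auto intro: mult_right_mono)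
  also have "\<dots> \<le> real (Suc m) * Cn c (Suc m)"
    unfolding Cn_def sum.atMost_Suc sum_distrib_left[symmetric] by (simp add: distrib_left)
  finally show ?thesis .
qed

lemma AC_D1: assumes "AC c s" "0 \<le> t" "t < s" shows "AC (D1 c) t"
  unfolding AC_def
  by (rule summable_comparison_test[OF _ AC_diffs[OF assms]])
     (auto intro!: exI[of _ 0] mult_right_mono Cn_D1[simplified] simp: Cn_nonneg assms)

lemma AC_D2: assumes "AC c s" "0 \<le> t" "t < s" shows "AC (D2 c) t"
  unfolding AC_def
  by (rule summable_comparison_test[OF _ AC_diffs[OF assms]])
     (auto intro!: exI[of _ 0] mult_right_mono Cn_D2[simplified] simp: Cn_nonneg assms)

lemma U_sums:
  assumes "AC c s" "\<bar>fst y\<bar> \<le> s" "\<bar>snd y\<bar> \<le> s"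
  shows "(\<lambda>m. hom_part c m y) sums U c y"
proof -
  have "summable (\<lambda>m. hom_part c m y)"
    by (rule summable_comparison_test[OF _ assms(1)[unfolded AC_def]])
       (use hom_bound[OF assms(2,3)] in auto)
  then show ?thesis unfolding U_def by (rule summable_sums)
qed

lemma U_deriv:
  assumes "AC c s" "0 < r" "r < s" "y \<in> ball 0 r"
  shows "(U c has_derivative (\<lambda>h. U (D1 c) y * fst h + U (D2 c) y * snd h)) (at y)"
proof -
  define S where "S = ball (0::real\<times>real) r"
  define A where "A n x = (if n = 0 then 0 else hom_part (D1 c) (n - 1) x)" for n x
  define B where "B n x = (if n = 0 then 0 else hom_part (D2 c) (n - 1) x)" for n x
  have inS: "\<bar>fst x\<bar> \<le> r" "\<bar>snd x\<bar> \<le> r" if "x \<in> S" for x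
    using that fst_le_norm[of x] snd_le_norm[of x] by (auto simp: S_def)
  have ac1: "AC (D1 c) r" and ac2: "AC (D2 c) r" using AC_D1 AC_D2 assms by auto
  have Asum: "(\<lambda>n. A n x) sums U (D1 c) x" if "x \<in> S" for x
  proof -
    have h: "(\<lambda>n. A (Suc n) x) sums U (D1 c) x" using U_sums[OF ac1 inS[OF that]] by (simp add: A_def)
    show ?thesis using sums_Suc_iff[of "\<lambda>n. A n x", THEN iffD1, OF h] by (simp add: A_def)
  qed
  have Bsum: "(\<lambda>n. B n x) sums U (D2 c) x" if "x \<in> S" for x
  proof -
    have h: "(\<lambda>n. B (Suc n) x) sums U (D2 c) x" using U_sums[OF ac2 inS[OF that]] by (simp add: B_def)
    show ?thesis using sums_Suc_iff[of "\<lambda>n. B n x", THEN iffD1, OF h] by (simp add: B_def)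
  qed
  define MA where "MA n = (if n = 0 then 0 else Cn (D1 c) (n - 1) * r ^ (n - 1))" for n
  define MB where "MB n = (if n = 0 then 0 else Cn (D2 c) (n - 1) * r ^ (n - 1))" for n
  have uA: "uniform_limit S (\<lambda>n x. \<Sum>i<n. A i x) (\<lambda>x. suminf (\<lambda>i. A i x)) sequentially"
  proof (rule Weierstrass_m_test)
    show "norm (A n x) \<le> MA n" if "x \<in> S" for n x
      using hom_bound[OF inS[OF that]] by (simp add: A_def MA_def)
    show "summable MA" using ac1 unfolding AC_def
      by (subst summable_Suc_iff[symmetric]) (simp add: MA_def)
  qed
  have uB: "uniform_limit S (\<lambda>n x. \<Sum>i<n. B i x) (\<lambda>x. suminf (\<lambda>i. B i x)) sequentially"
  proof (rule Weierstrass_m_test)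
    show "norm (B n x) \<le> MB n" if "x \<in> S" for n x
      using hom_bound[OF inS[OF that]] by (simp add: B_def MB_def)
    show "summable MB" using ac2 unfolding AC_def
      by (subst summable_Suc_iff[symmetric]) (simp add: MB_def)
  qed
  have y: "y \<in> S" using assms by (simp add: S_def)
  have "\<exists>g. \<forall>x\<in>S. (\<lambda>n. hom_part c n x) sums (g x) \<and>
     (g has_derivative (\<lambda>h. U (D1 c) x * fst h + U (D2 c) x * snd h)) (at x within S)"
  proof (rule has_derivative_series[where f' = "\<lambda>n x h. A n x * fst h + B n x * snd h"])
    show "convex S" by (simp add: S_def)
    show "(hom_part c n has_derivative (\<lambda>h. A n x * fst h + B n x * snd h)) (at x within S)"
      if "x \<in> S" for n x
    proof (cases n)
      case 0
      have "hom_part c 0 = (\<lambda>_. c 0 0)" by (rule ext) (simp add: hom_part_def)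
      then show ?thesis using 0 by (simp add: A_def B_def)
    next
      case (Suc m)
      then show ?thesis using hom_deriv[of c m x] by (auto simp: A_def B_def intro: has_derivative_at_withinI)
    qed
    show "y \<in> S" by (rule y)
    show "(\<lambda>n. hom_part c n y) sums U c y"
      by (rule U_sums[of c s]) (use inS[OF y] assms in auto)
    fix e :: real assume e: "e > 0"
    have "\<forall>\<^sub>F n in sequentially. \<forall>x\<in>S. dist (\<Sum>i<n. A i x) (suminf (\<lambda>i. A i x)) < e / 2"
      using uA e unfolding uniform_limit_iff by (meson half_gt_zero)
    moreover have "\<forall>\<^sub>F n in sequentially. \<forall>x\<in>S. dist (\<Sum>i<n. B i x) (suminf (\<lambda>i. B i x)) < e / 2"
      using uB e unfolding uniform_limit_iff by (meson half_gt_zero)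
    ultimately show "\<forall>\<^sub>F n in sequentially. \<forall>x\<in>S. \<forall>h.
        norm ((\<Sum>i<n. A i x * fst h + B i x * snd h) - (U (D1 c) x * fst h + U (D2 c) x * snd h)) \<le> e * norm h"
    proof eventually_elim
      case (elim n)
      show ?case
      proof (intro ballI allI)
        fix x :: "real \<times> real" and h :: "real \<times> real" assume x: "x \<in> S"
        have a: "\<bar>(\<Sum>i<n. A i x) - U (D1 c) x\<bar> \<le> e / 2"
          using elim x sums_unique[OF Asum[OF x]] by (auto simp: dist_real_def)
        have b: "\<bar>(\<Sum>i<n. B i x) - U (D2 c) x\<bar> \<le> e / 2"
          using elim x sums_unique[OF Bsum[OF x]] by (auto simp: dist_real_def)
        have "(\<Sum>i<n. A i x * fst h + B i x * snd h) - (U (D1 c) x * fst h + U (D2 c) x * snd h)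
           = ((\<Sum>i<n. A i x) - U (D1 c) x) * fst h + ((\<Sum>i<n. B i x) - U (D2 c) x) * snd h"
          by (simp add: sum.distrib sum_distrib_right sum_distrib_left algebra_simps)
        also have "norm \<dots> \<le> \<bar>(\<Sum>i<n. A i x) - U (D1 c) x\<bar> * \<bar>fst h\<bar> + \<bar>(\<Sum>i<n. B i x) - U (D2 c) x\<bar> * \<bar>snd h\<bar>"
          by (simp add: abs_mult[symmetric] abs_triangle_ineq)
        also have "\<dots> \<le> e / 2 * norm h + e / 2 * norm h"
          by (intro add_mono mult_mono a b fst_le_norm snd_le_norm) (use e in auto)
        finally show "norm ((\<Sum>i<n. A i x * fst h + B i x * snd h) - (U (D1 c) x * fst h + U (D2 c) x * snd h)) \<le> e * norm h"
          by simp
      qed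
    qed
  qed
  then obtain g where g: "\<And>x. x \<in> S \<Longrightarrow> (\<lambda>n. hom_part c n x) sums (g x)"
    "\<And>x. x \<in> S \<Longrightarrow> (g has_derivative (\<lambda>h. U (D1 c) x * fst h + U (D2 c) x * snd h)) (at x within S)"
    by blast
  have "(g has_derivative (\<lambda>h. U (D1 c) y * fst h + U (D2 c) y * snd h)) (at y)"
    using g(2)[OF y] at_within_open[OF y] by (simp add: S_def)
  then show ?thesis
    by (rule has_derivative_transform_within_open[where s = S])
       (use y g(1) in \<open>auto simp: S_def U_def sums_iff\<close>)
qed

lemma chain2:
  assumes "(F has_derivative (\<lambda>h. A * fst h + B * snd h)) (at (ga t, gb t))"
    and "(ga has_real_derivative d1) (at t)" and "(gb has_real_derivative d2) (at t)"
  shows "((\<lambda>t. F (ga t, gb t)) has_real_derivative (A * d1 + B * d2)) (at t)"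
proof -
  have p: "((\<lambda>t. (ga t, gb t)) has_derivative (\<lambda>h. (d1 * h, d2 * h))) (at t)"
    using assms(2,3) unfolding has_field_derivative_def by (rule has_derivative_Pair)
  have "((\<lambda>t. F (ga t, gb t)) has_derivative (\<lambda>h. A * (d1 * h) + B * (d2 * h))) (at t)"
    using has_derivative_compose[OF p assms(1)] by (simp add: o_def)
  then show ?thesis unfolding has_field_derivative_def
    by (rule has_derivative_eq_rhs) (auto simp: algebra_simps)
qed

lemma euler:
  "hom_part (D1 c) m y * fst y + hom_part (D2 c) m y * snd y = real (Suc m) * hom_part c (Suc m) y"
proof -
  have "((\<lambda>t. hom_part c (Suc m) (t * fst y, t * snd y)) has_real_derivative
          (hom_part (D1 c) m y * fst y + hom_part (D2 c) m y * snd y)) (at 1)"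
  proof -
    have "((\<lambda>t. hom_part c (Suc m) (t * fst y, t * snd y)) has_real_derivative
          (hom_part (D1 c) m (1 * fst y, 1 * snd y) * fst y + hom_part (D2 c) m (1 * fst y, 1 * snd y) * snd y)) (at 1)"
      by (rule chain2[where ga="\<lambda>t. t * fst y" and gb="\<lambda>t. t * snd y", OF hom_deriv])
         (auto intro!: derivative_eq_intros)
    then show ?thesis by simp
  qed
  moreover have "((\<lambda>t. hom_part c (Suc m) (t * fst y, t * snd y)) has_real_derivative
          (real (Suc m) * hom_part c (Suc m) y)) (at 1)"
    unfolding hom_homog by (auto intro!: derivative_eq_intros)
  ultimately show ?thesis by (rule DERIV_unique)
qed

lemma powser_unique0:
  fixes b :: "nat \<Rightarrow> real"
  assumes "\<epsilon> > 0" "\<And>s. 0 < s \<Longrightarrow> s < \<epsilon> \<Longrightarrow> (\<lambda>n. b n * s ^ n) sums 0"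
  shows "b n = 0"
proof (induction n rule: less_induct)
  case (less n)
  define g where "g s = (\<Sum>k. b (k + n) * s ^ k)" for s
  have sh: "(\<lambda>k. b (k + n) * s ^ k) sums 0" if s: "0 < s" "s < \<epsilon>" for s
  proof -
    have "(\<Sum>i<n. b i * s ^ i) = 0" using less by auto
    then have "(\<lambda>k. b (k + n) * s ^ (k + n)) sums 0"
      using sums_iff_shift[of "\<lambda>i. b i * s ^ i" n 0] assms(2)[OF s] by simp
    then have "(\<lambda>k. b (k + n) * s ^ (k + n) / s ^ n) sums (0 / s ^ n)" by (rule sums_divide)
    then show ?thesis using s by (simp add: power_add)
  qed
  have g0: "g s = 0" if "0 < s" "s < \<epsilon>" for s
    using sh[OF that] by (simp add: g_def sums_iff)
  have "isCont g 0" unfolding g_def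
    by (rule isCont_powser[of _ "\<epsilon> / 2"]) (use sh[of "\<epsilon>/2"] assms(1) in \<open>auto simp: sums_iff\<close>)
  then have "(g \<longlongrightarrow> g 0) (at_right 0)"
    unfolding isCont_def by (rule tendsto_mono[OF at_le, rotated]) auto
  moreover have "(g \<longlongrightarrow> 0) (at_right 0)"
  proof (rule tendsto_eventually)
    show "\<forall>\<^sub>F x in at_right 0. g x = 0"
      unfolding eventually_at_right[OF assms(1)] using g0 by (intro exI[of _ \<epsilon>]) (auto simp: assms)
  qed
  ultimately have "g 0 = 0" using tendsto_unique trivial_limit_at_right_real by blast
  moreover have "g 0 = b n" unfolding g_def using powser_zero[of "\<lambda>k. b (k + n)"] by simp
  ultimately show ?case by simp
qed

definition T :: "(nat \<Rightarrow> nat \<Rightarrow> real) \<Rightarrow> nat \<Rightarrow> real \<Rightarrow> real" where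
  "T c m \<theta> = hom_part (D1 c) m (cos \<theta>, sin \<theta>) * (- sin \<theta>) + hom_part (D2 c) m (cos \<theta>, sin \<theta>) * cos \<theta>"

lemma f_deriv:
  "((\<lambda>\<theta>. hom_part c (Suc m) (cos \<theta>, sin \<theta>)) has_real_derivative T c m \<theta>) (at \<theta>)"
  unfolding T_def
  by (rule chain2[OF hom_deriv]) (auto intro!: derivative_eq_intros)

lemma D12: "D1 (D2 c) = D2 (D1 c)"
  by (intro ext) (simp add: D1_def D2_def)

lemma T_deriv:
  "(T c (Suc j) has_real_derivative
     (hom_part (D1 (D1 c)) j (cos \<theta>, sin \<theta>) * (sin \<theta>)^2
      - 2 * hom_part (D2 (D1 c)) j (cos \<theta>, sin \<theta>) * sin \<theta> * cos \<theta>
      + hom_part (D2 (D2 c)) j (cos \<theta>, sin \<theta>) * (cos \<theta>)^2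
      - hom_part (D1 c) (Suc j) (cos \<theta>, sin \<theta>) * cos \<theta>
      - hom_part (D2 c) (Suc j) (cos \<theta>, sin \<theta>) * sin \<theta>)) (at \<theta>)"
proof -
  note a = f_deriv[of "D1 c" j \<theta>] and b = f_deriv[of "D2 c" j \<theta>]
  have "(T c (Suc j) has_real_derivative
     (T (D1 c) j \<theta> * (- sin \<theta>) + hom_part (D1 c) (Suc j) (cos \<theta>, sin \<theta>) * (- cos \<theta>)
      + (T (D2 c) j \<theta> * cos \<theta> + hom_part (D2 c) (Suc j) (cos \<theta>, sin \<theta>) * (- sin \<theta>)))) (at \<theta>)"
    unfolding T_def[of c "Suc j", abs_def]
  proof (rule DERIV_add)
    show "((\<lambda>z. hom_part (D1 c) (Suc j) (cos z, sin z) * - sin z) has_real_derivative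
      T (D1 c) j \<theta> * - sin \<theta> + hom_part (D1 c) (Suc j) (cos \<theta>, sin \<theta>) * - cos \<theta>) (at \<theta>)"
      by (rule DERIV_cong[OF DERIV_mult[OF a DERIV_minus[OF DERIV_sin]]]) (simp add: algebra_simps)
    show "((\<lambda>z. hom_part (D2 c) (Suc j) (cos z, sin z) * cos z) has_real_derivative
      T (D2 c) j \<theta> * cos \<theta> + hom_part (D2 c) (Suc j) (cos \<theta>, sin \<theta>) * - sin \<theta>) (at \<theta>)"
      by (rule DERIV_cong[OF DERIV_mult[OF b DERIV_cos]]) (simp add: algebra_simps)
  qed
  then show ?thesis
    by (rule DERIV_cong) (simp add: T_def D12 power2_eq_square algebra_simps)
qed

lemma polar_lap:
  fixes j :: nat and \<theta> :: real
  defines "e \<equiv> (cos \<theta>, sin \<theta>)"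
  shows "(hom_part (D1 (D1 c)) j e * (sin \<theta>)^2
      - 2 * hom_part (D2 (D1 c)) j e * sin \<theta> * cos \<theta>
      + hom_part (D2 (D2 c)) j e * (cos \<theta>)^2
      - hom_part (D1 c) (Suc j) e * cos \<theta>
      - hom_part (D2 c) (Suc j) e * sin \<theta>)
      + (real (Suc (Suc j)))^2 * hom_part c (Suc (Suc j)) e
    = hom_part (D1 (D1 c)) j e + hom_part (D2 (D2 c)) j e"
proof -
  have E0: "hom_part (D1 c) (Suc j) e * cos \<theta> + hom_part (D2 c) (Suc j) e * sin \<theta>
      = real (Suc (Suc j)) * hom_part c (Suc (Suc j)) e"
    using euler[of c "Suc j" e] by (simp add: e_def)
  have E1: "hom_part (D1 (D1 c)) j e * cos \<theta> + hom_part (D2 (D1 c)) j e * sin \<theta>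
      = real (Suc j) * hom_part (D1 c) (Suc j) e"
    using euler[of "D1 c" j e] by (simp add: e_def)
  have E2: "hom_part (D2 (D1 c)) j e * cos \<theta> + hom_part (D2 (D2 c)) j e * sin \<theta>
      = real (Suc j) * hom_part (D2 c) (Suc j) e"
    using euler[of "D2 c" j e] by (simp add: e_def D12)
  have cs: "(sin \<theta>)^2 + (cos \<theta>)^2 = 1" by simp
  define P11 P12 P22 P1 P2 P where "P11 = hom_part (D1 (D1 c)) j e" and "P12 = hom_part (D2 (D1 c)) j e"
    and "P22 = hom_part (D2 (D2 c)) j e" and "P1 = hom_part (D1 c) (Suc j) e"
    and "P2 = hom_part (D2 c) (Suc j) e" and "P = hom_part c (Suc (Suc j)) e"
  define k where "k = real j"
  have E0': "P1 * cos \<theta> + P2 * sin \<theta> = (k + 2) * P" using E0 by (simp add: P1_def P2_def P_def k_def)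
  have E1': "P11 * cos \<theta> + P12 * sin \<theta> = (k + 1) * P1" using E1 by (simp add: P11_def P12_def P1_def k_def)
  have E2': "P12 * cos \<theta> + P22 * sin \<theta> = (k + 1) * P2" using E2 by (simp add: P22_def P12_def P2_def k_def)
  have "P11 * (sin \<theta>)^2 - 2 * P12 * sin \<theta> * cos \<theta> + P22 * (cos \<theta>)^2 - P1 * cos \<theta> - P2 * sin \<theta>
      + (k + 2)^2 * P = P11 + P22"
    using E0' E1' E2' cs by algebra
  then show ?thesis by (simp add: P11_def P12_def P22_def P1_def P2_def P_def k_def add.commute)
qed

lemma ode_const:
  fixes f f' f'' :: "real \<Rightarrow> real" and n K \<phi> \<psi> :: real
  assumes n: "n > 0" and d1: "\<And>x. (f has_real_derivative f' x) (at x)"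
    and d2: "\<And>x. (f' has_real_derivative f'' x) (at x)"
    and eq: "\<And>x. f'' x + n^2 * f x = K" and z1: "f' \<phi> = 0" and z2: "f' \<psi> = 0"
    and sn: "sin (n * (\<psi> - \<phi>)) \<noteq> 0"
  shows "f x = K / n^2"
proof -
  define a where "a = f \<phi> - K / n^2"
  define h where "h x = f x - K / n^2 - a * cos (n * (x - \<phi>))" for x
  define h' where "h' x = f' x + a * n * sin (n * (x - \<phi>))" for x
  define h'' where "h'' x = f'' x + a * n^2 * cos (n * (x - \<phi>))" for x
  have dh: "(h has_real_derivative h' x) (at x)" for x
    unfolding h_def[abs_def] h'_def
    by (rule DERIV_cong, (rule derivative_intros d1)+) (auto intro!: derivative_eq_intros simp: algebra_simps)
  have dh': "(h' has_real_derivative h'' x) (at x)" for x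
    unfolding h'_def[abs_def] h''_def
    by (rule DERIV_cong, (rule derivative_intros d2)+) (auto intro!: derivative_eq_intros simp: algebra_simps power2_eq_square)
  have hh: "h'' x = -(n^2) * h x" for x
  proof -
    have e: "f'' x = K - n^2 * f x" using eq[of x] by simp
    show ?thesis unfolding h''_def h_def e using n by (simp add: field_simps)
  qed
  define E where "E x = (h' x)^2 + n^2 * (h x)^2" for x
  have dE: "(E has_real_derivative 0) (at x)" for x
  proof -
    have "(E has_real_derivative (2 * h' x * h'' x + n^2 * (2 * h x * h' x))) (at x)"
      unfolding E_def[abs_def]
      by (rule DERIV_cong, (rule derivative_intros dh dh')+) (simp add: algebra_simps)
    then show ?thesis by (simp add: hh algebra_simps)
  qed
  have Ephi: "E \<phi> = 0" by (simp add: E_def h'_def h_def z1 a_def)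
  have E0: "E x = 0" for x using DERIV_isconst_all[of E x \<phi>] dE Ephi by auto
  have hz: "h x = 0 \<and> h' x = 0" for x
  proof -
    have "(h' x)^2 \<ge> 0" "n^2 * (h x)^2 \<ge> 0" by auto
    with E0[of x] have "(h' x)^2 = 0" "n^2 * (h x)^2 = 0" unfolding E_def by linarith+
    then show ?thesis using n by simp
  qed
  have "a * n * sin (n * (\<psi> - \<phi>)) = 0" using hz[of \<psi>] z2 by (simp add: h'_def)
  then have "a = 0" using n sn by simp
  then show ?thesis using hz[of x] by (simp add: h_def)
qed

lemma partial_from:
  assumes "((\<lambda>z. G (x0 + z)) has_derivative (\<lambda>h. A * fst h + B * snd h)) (at y)"
  shows "partial1 G (x0 + y) = A" "partial2 G (x0 + y) = B"
    "dir_deriv G (x0 + y) v = A * fst v + B * snd v"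
proof -
  have y: "y = (fst y, snd y)" by simp
  have "((\<lambda>t. G (x0 + (t - fst x0, snd y))) has_real_derivative (A * 1 + B * 0)) (at (fst x0 + fst y))"
    by (rule chain2[where F = "\<lambda>z. G (x0 + z)"]) (use assms in \<open>auto intro!: derivative_eq_intros\<close>)
  moreover have "(\<lambda>t. G (x0 + (t - fst x0, snd y))) = (\<lambda>t. G (t, snd (x0 + y)))"
    by (rule ext, rule arg_cong[of _ _ G]) (simp add: prod_eq_iff)
  ultimately show "partial1 G (x0 + y) = A" unfolding partial1_def by (simp add: DERIV_imp_deriv)
  have "((\<lambda>t. G (x0 + (fst y, t - snd x0))) has_real_derivative (A * 0 + B * 1)) (at (snd x0 + snd y))"
    by (rule chain2[where F = "\<lambda>z. G (x0 + z)"]) (use assms in \<open>auto intro!: derivative_eq_intros\<close>)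
  moreover have "(\<lambda>t. G (x0 + (fst y, t - snd x0))) = (\<lambda>t. G (fst (x0 + y), t))"
    by (rule ext, rule arg_cong[of _ _ G]) (simp add: prod_eq_iff)
  ultimately show "partial2 G (x0 + y) = B" unfolding partial2_def by (simp add: DERIV_imp_deriv)
  have "((\<lambda>t. G (x0 + (fst y + t * fst v, snd y + t * snd v))) has_real_derivative (A * fst v + B * snd v)) (at 0)"
    by (rule chain2[where F = "\<lambda>z. G (x0 + z)"]) (use assms in \<open>auto intro!: derivative_eq_intros\<close>)
  moreover have "(\<lambda>t. G (x0 + (fst y + t * fst v, snd y + t * snd v))) = (\<lambda>t. G (x0 + y + t *\<^sub>R v))"
    by (rule ext, rule arg_cong[of _ _ G]) (simp add: prod_eq_iff)
  ultimately show "dir_deriv G (x0 + y) v = A * fst v + B * snd v" unfolding dir_deriv_def by (simp add: DERIV_imp_deriv)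
qed

lemma irr_sin:
  assumes "\<alpha> \<notin> \<rat>" "n > 0"
  shows "sin (real n * (\<alpha> * 2 * pi)) \<noteq> 0"
proof
  assume "sin (real n * (\<alpha> * 2 * pi)) = 0"
  then obtain i :: int where i: "real n * (\<alpha> * 2 * pi) = of_int i * pi" by (auto simp: sin_zero_iff_int2)
  then have "\<alpha> = of_int i / (2 * real n)" using assms(2) by (simp add: field_simps)
  then have "\<alpha> \<in> \<rat>" by simp
  with assms(1) show False by simp
qed

definition kappa :: "real \<Rightarrow> real \<Rightarrow> nat \<Rightarrow> real" where
  "kappa a lam n = (if even n then a * (- lam / 4) ^ (n div 2) / (fact (n div 2))^2 else 0)"

lemma kappa_step: "- lam * kappa a lam j / (real (Suc (Suc j)))^2 = kappa a lam (Suc (Suc j))"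
proof (cases "even j")
  case True
  then obtain k where k: "j = 2 * k" by blast
  have "Suc (Suc j) div 2 = Suc k" "j div 2 = k" using k by auto
  moreover have "real (Suc (Suc j)) = 2 * (real k + 1)" using k by simp
  ultimately show ?thesis using True k
    by (simp add: kappa_def field_simps power2_eq_square)
next
  case False
  then show ?thesis by (simp add: kappa_def)
qed


lemma norm_neg_pair: "norm (- x, - y) = norm (x::real, y::real)"
  by (simp add: norm_Pair)

lemma norm_rcs: "r \<ge> 0 \<Longrightarrow> norm (r * cos t, r * sin t) = (r::real)"
  by (simp add: norm_Pair power_mult_distrib flip: distrib_left)

lemma norm_cs: "norm (cos t, sin (t::real)) = 1"
  using norm_rcs[of 1 t] by simp

lemma sing_T:
  assumes sl: "singular_line \<Omega> u \<Gamma>" and G: "\<Gamma> = closed_segment x0 (x0 + r *\<^sub>R (cos \<phi>, sin \<phi>))"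
    and r: "r > 0" and rho: "\<rho> > 0"
    and dd: "\<And>y v. y \<in> ball 0 \<rho> \<Longrightarrow> dir_deriv u (x0 + y) v = U (D1 c) y * fst v + U (D2 c) y * snd v"
    and s1: "\<And>y. y \<in> ball 0 \<rho> \<Longrightarrow> (\<lambda>m. hom_part (D1 c) m y) sums U (D1 c) y"
    and s2: "\<And>y. y \<in> ball 0 \<rho> \<Longrightarrow> (\<lambda>m. hom_part (D2 c) m y) sums U (D2 c) y"
  shows "T c m \<phi> = 0"
proof -
  define e where "e = (cos \<phi>, sin \<phi>)"
  define w where "w = (- sin \<phi>, cos \<phi>)"
  obtain a b where ab: "a \<noteq> b" "\<Gamma> = closed_segment a b"
    and z: "\<forall>x\<in>\<Gamma>. dir_deriv u x ((1 / norm (b - a)) *\<^sub>R (- snd (b - a), fst (b - a))) = 0"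
    using sl unfolding singular_line_def Let_def by blast
  have "{a, b} = {x0, x0 + r *\<^sub>R e}" using ab(2) G by (simp add: e_def)
  then have "(a = x0 \<and> b = x0 + r *\<^sub>R e) \<or> (a = x0 + r *\<^sub>R e \<and> b = x0)"
    by (auto simp: doubleton_eq_iff)
  then obtain sg :: real where sg: "sg = 1 \<or> sg = -1"
    and nu: "(1 / norm (b - a)) *\<^sub>R (- snd (b - a), fst (b - a)) = sg *\<^sub>R w"
  proof (elim disjE conjE)
    assume "a = x0" "b = x0 + r *\<^sub>R e"
    then have "(1 / norm (b - a)) *\<^sub>R (- snd (b - a), fst (b - a)) = 1 *\<^sub>R w"
      using r by (simp add: e_def w_def norm_cs norm_rcs norm_neg_pair)
    then show thesis using that by blast
  next
    assume "a = x0 + r *\<^sub>R e" "b = x0"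
    then have "(1 / norm (b - a)) *\<^sub>R (- snd (b - a), fst (b - a)) = (-1) *\<^sub>R w"
      using r by (simp add: e_def w_def norm_cs norm_rcs norm_neg_pair)
    then show thesis using that by blast
  qed
  show ?thesis
  proof (rule powser_unique0[of "min r \<rho>"])
    show "min r \<rho> > 0" using r rho by simp
    fix s :: real assume s: "0 < s" "s < min r \<rho>"
    define y where "y = (s * cos \<phi>, s * sin \<phi>)"
    have y: "y \<in> ball 0 \<rho>" using s norm_rcs[of s \<phi>] by (simp add: y_def)
    have "x0 + y \<in> \<Gamma>" unfolding G in_segment
      by (rule exI[of _ "s / r"]) (use s r in \<open>auto simp: y_def prod_eq_iff field_simps\<close>)
    then have "dir_deriv u (x0 + y) (sg *\<^sub>R w) = 0" using z nu by auto
    then have "sg * (U (D1 c) y * (- sin \<phi>) + U (D2 c) y * cos \<phi>) = 0"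
      by (simp add: dd[OF y] w_def algebra_simps)
    then have zz: "U (D1 c) y * (- sin \<phi>) + U (D2 c) y * cos \<phi> = 0" using sg by auto
    have "(\<lambda>m. hom_part (D1 c) m y * (- sin \<phi>) + hom_part (D2 c) m y * cos \<phi>) sums
        (U (D1 c) y * (- sin \<phi>) + U (D2 c) y * cos \<phi>)"
      by (intro sums_add sums_mult2 s1 s2 y)
    moreover have "hom_part (D1 c) m y * (- sin \<phi>) + hom_part (D2 c) m y * cos \<phi> = T c m \<phi> * s ^ m" for m
      by (simp add: y_def hom_homog T_def algebra_simps)
    ultimately show "(\<lambda>m. T c m \<phi> * s ^ m) sums 0" using zz by simp
  qed
qed

lemma key:
  fixes c :: "nat \<Rightarrow> nat \<Rightarrow> real" and R lam \<alpha> \<phi> rp rm :: real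
  assumes pe: "power_expansion_at u x0 c R"
    and op: "open \<Omega>" and x0: "x0 \<in> \<Omega>"
    and pde: "\<forall>x\<in>\<Omega>. - laplacian u x = lam * u x"
    and slp: "singular_line \<Omega> u \<Gamma>p" and slm: "singular_line \<Omega> u \<Gamma>m"
    and irr: "\<alpha> \<notin> \<rat>"
    and gp: "\<Gamma>p = closed_segment x0 (x0 + rp *\<^sub>R (cos \<phi>, sin \<phi>))" and rp: "rp > 0"
    and gm: "\<Gamma>m = closed_segment x0 (x0 + rm *\<^sub>R (cos (\<phi> + \<alpha> * 2 * pi), sin (\<phi> + \<alpha> * 2 * pi)))"
    and rm: "rm > 0"
  shows "hom_part c n (cos \<theta>, sin \<theta>) = kappa (u x0) lam n"
proof -
  have R: "R > 0" and pe2: "\<And>y. norm y < R \<Longrightarrow>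
        summable (\<lambda>m. \<Sum>j\<le>m. \<bar>c m j\<bar> * \<bar>fst y\<bar> ^ j * \<bar>snd y\<bar> ^ (m - j)) \<and>
        (\<lambda>m. hom_part c m y) sums u (x0 + y)"
    using pe unfolding power_expansion_at_def by auto
  define \<sigma> where "\<sigma> = R / 3"
  have sig: "\<sigma> > 0" using R by (simp add: \<sigma>_def)
  have ACc: "AC c \<sigma>"
  proof -
    have "norm (\<sigma>, \<sigma>) \<le> norm \<sigma> + norm \<sigma>" by (rule norm_Pair_le)
    then have "norm (\<sigma>, \<sigma>) < R" using sig by (simp add: \<sigma>_def)
    from pe2[OF this] have "summable (\<lambda>m. \<Sum>j\<le>m. \<bar>c m j\<bar> * \<bar>\<sigma>\<bar> ^ j * \<bar>\<sigma>\<bar> ^ (m - j))" by simp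
    moreover have "(\<Sum>j\<le>m. \<bar>c m j\<bar> * \<bar>\<sigma>\<bar> ^ j * \<bar>\<sigma>\<bar> ^ (m - j)) = Cn c m * \<sigma> ^ m" for m
      unfolding Cn_def sum_distrib_right
      by (rule sum.cong) (use sig in \<open>auto simp: mult.assoc power_add[symmetric]\<close>)
    ultimately show ?thesis unfolding AC_def by simp
  qed
  obtain \<epsilon> where eps: "\<epsilon> > 0" "ball x0 \<epsilon> \<subseteq> \<Omega>" using op x0 open_contains_ball by blast
  define \<rho> where "\<rho> = min (\<sigma> / 2) \<epsilon>"
  have rho: "\<rho> > 0" "\<rho> \<le> \<sigma> / 2" "\<rho> \<le> \<epsilon>" using sig eps by (auto simp: \<rho>_def)
  have AC1: "AC (D1 c) (3 * \<sigma> / 4)" and AC2: "AC (D2 c) (3 * \<sigma> / 4)"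
    using AC_D1[OF ACc] AC_D2[OF ACc] sig by auto
  have AC11: "AC (D1 (D1 c)) (\<sigma> / 2)" and AC21: "AC (D2 (D1 c)) (\<sigma> / 2)"
    using AC_D1[OF AC1] AC_D2[OF AC1] sig by auto
  have AC12: "AC (D1 (D2 c)) (\<sigma> / 2)" and AC22: "AC (D2 (D2 c)) (\<sigma> / 2)"
    using AC_D1[OF AC2] AC_D2[OF AC2] sig by auto
  have inb: "\<bar>fst y\<bar> \<le> \<sigma> / 2" "\<bar>snd y\<bar> \<le> \<sigma> / 2" "\<bar>fst y\<bar> \<le> 3 * \<sigma> / 4" "\<bar>snd y\<bar> \<le> 3 * \<sigma> / 4"
    "\<bar>fst y\<bar> \<le> \<sigma>" "\<bar>snd y\<bar> \<le> \<sigma>" if "y \<in> ball 0 \<rho>" for y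
    using that fst_le_norm[of y] snd_le_norm[of y] rho sig by auto
  have rep: "u (x0 + z) = U c z" if "z \<in> ball 0 \<rho>" for z
  proof -
    have "norm z < R" using that rho sig by (simp add: \<sigma>_def)
    then show ?thesis using pe2 by (simp add: U_def sums_iff)
  qed
  have du: "((\<lambda>z. u (x0 + z)) has_derivative (\<lambda>h. U (D1 c) y * fst h + U (D2 c) y * snd h)) (at y)"
    if "y \<in> ball 0 \<rho>" for y
    by (rule has_derivative_transform_within_open[OF U_deriv[OF ACc rho(1) _ that] open_ball that])
       (use rho sig rep in auto)
  have p1: "partial1 u (x0 + y) = U (D1 c) y" and p2: "partial2 u (x0 + y) = U (D2 c) y"
    and dd: "\<And>v. dir_deriv u (x0 + y) v = U (D1 c) y * fst v + U (D2 c) y * snd v"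
    if "y \<in> ball 0 \<rho>" for y
    using partial_from[OF du[OF that]] by auto
  have du1: "((\<lambda>z. partial1 u (x0 + z)) has_derivative
       (\<lambda>h. U (D1 (D1 c)) y * fst h + U (D2 (D1 c)) y * snd h)) (at y)"
    if "y \<in> ball 0 \<rho>" for y
    by (rule has_derivative_transform_within_open[OF U_deriv[OF AC1 rho(1) _ that] open_ball that])
       (use rho sig p1 in auto)
  have du2: "((\<lambda>z. partial2 u (x0 + z)) has_derivative
       (\<lambda>h. U (D1 (D2 c)) y * fst h + U (D2 (D2 c)) y * snd h)) (at y)"
    if "y \<in> ball 0 \<rho>" for y
    by (rule has_derivative_transform_within_open[OF U_deriv[OF AC2 rho(1) _ that] open_ball that])
       (use rho sig p2 in auto)
  have eq0: "U (D1 (D1 c)) y + U (D2 (D2 c)) y + lam * U c y = 0" if y: "y \<in> ball 0 \<rho>" for y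
  proof -
    have "x0 + y \<in> \<Omega>" using y rho eps by (auto simp: dist_norm)
    then have "- laplacian u (x0 + y) = lam * u (x0 + y)" using pde by auto
    moreover have "laplacian u (x0 + y) = U (D1 (D1 c)) y + U (D2 (D2 c)) y"
      unfolding laplacian_def using partial_from(1)[OF du1[OF y]] partial_from(2)[OF du2[OF y]] by simp
    ultimately show ?thesis using rep[OF y] by simp
  qed
  have hrec: "hom_part (D1 (D1 c)) m (cos t, sin t) + hom_part (D2 (D2 c)) m (cos t, sin t)
      + lam * hom_part c m (cos t, sin t) = 0" for m t
  proof (rule powser_unique0[of \<rho>, OF rho(1)])
    fix s :: real assume s: "0 < s" "s < \<rho>"
    define y where "y = (s * cos t, s * sin t)"
    have y: "y \<in> ball 0 \<rho>" using s norm_rcs[of s t] by (simp add: y_def)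
    have "(\<lambda>m. hom_part (D1 (D1 c)) m y + hom_part (D2 (D2 c)) m y + lam * hom_part c m y) sums
        (U (D1 (D1 c)) y + U (D2 (D2 c)) y + lam * U c y)"
      by (intro sums_add sums_mult U_sums[OF AC11] U_sums[OF AC22] U_sums[OF ACc] inb[OF y])
    moreover have "hom_part (D1 (D1 c)) m y + hom_part (D2 (D2 c)) m y + lam * hom_part c m y
      = (hom_part (D1 (D1 c)) m (cos t, sin t) + hom_part (D2 (D2 c)) m (cos t, sin t)
      + lam * hom_part c m (cos t, sin t)) * s ^ m" for m
      by (simp add: y_def hom_homog algebra_simps)
    ultimately show "(\<lambda>m. (hom_part (D1 (D1 c)) m (cos t, sin t) + hom_part (D2 (D2 c)) m (cos t, sin t)
      + lam * hom_part c m (cos t, sin t)) * s ^ m) sums 0" using eq0[OF y] by simp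
  qed
  have s1: "(\<lambda>m. hom_part (D1 c) m y) sums U (D1 c) y" if "y \<in> ball 0 \<rho>" for y
    using U_sums[OF AC1] inb[OF that] by auto
  have s2: "(\<lambda>m. hom_part (D2 c) m y) sums U (D2 c) y" if "y \<in> ball 0 \<rho>" for y
    using U_sums[OF AC2] inb[OF that] by auto
  define \<psi> where "\<psi> = \<phi> + \<alpha> * 2 * pi"
  have Tp: "T c m \<phi> = 0" for m
    by (rule sing_T[OF slp gp rp rho(1)]) (use dd s1 s2 in auto)
  have Tm: "T c m \<psi> = 0" for m
    by (rule sing_T[OF slm gm[folded \<psi>_def] rm rho(1)]) (use dd s1 s2 in auto)
  have sn: "sin (real n * (\<psi> - \<phi>)) \<noteq> 0" if "n > 0" for n
    using irr_sin[OF irr that] by (simp add: \<psi>_def)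
  have "\<forall>t. hom_part c n (cos t, sin t) = kappa (u x0) lam n"
  proof (induction n rule: less_induct)
    case (less n)
    show ?case
    proof (cases n)
      case 0
      have h0: "(\<lambda>m. hom_part c m (0, 0)) sums u x0" using pe2[of 0] R by (simp add: zero_prod_def[symmetric])
      have "hom_part c m (0, 0) = hom_part c m (1, 0) * 0 ^ m" for m using hom_homog[of c m 0 1 0] by simp
      with h0 have "(\<lambda>m. hom_part c m (1, 0) * 0 ^ m) sums u x0" by simp
      moreover have "(\<lambda>m. hom_part c m (1, 0) * 0 ^ m) sums hom_part c 0 (1, 0)"
        by (rule powser_sums_zero)
      ultimately have "hom_part c 0 (1, 0) = u x0" using sums_unique2 by fastforce
      then show ?thesis using 0 by (simp add: hom_part_def kappa_def)
    next
      case (Suc j)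
      show ?thesis
      proof (cases j)
        case 0
        define A where "A = c 1 1"
        define B where "B = c 1 0"
        have f: "hom_part c 1 (cos t, sin t) = A * cos t + B * sin t" for t
          by (simp add: hom_part_def A_def B_def)
        have Tc: "T c 0 t = - A * sin t + B * cos t" for t
          by (simp add: T_def hom_part_def D1_def D2_def A_def B_def)
        have d1: "((\<lambda>t. hom_part c 1 (cos t, sin t)) has_real_derivative T c 0 x) (at x)" for x
          using f_deriv[of c 0 x] by simp
        have d2: "(T c 0 has_real_derivative (\<lambda>t. - A * cos t - B * sin t) x) (at x)" for x
          unfolding Tc[abs_def] by (auto intro!: derivative_eq_intros)
        have e: "(\<lambda>t. - A * cos t - B * sin t) x + (real 1)^2 * hom_part c 1 (cos x, sin x) = 0" for x
          using f[of x] by simp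
        have "\<forall>t. hom_part c 1 (cos t, sin t) = 0 / (real 1)^2"
          using ode_const[where f = "\<lambda>t. hom_part c 1 (cos t, sin t)" and f' = "T c 0"
              and f'' = "\<lambda>t. - A * cos t - B * sin t" and n = "real 1" and K = 0 and \<phi> = \<phi> and \<psi> = \<psi>,
              OF _ d1 d2 e Tp Tm sn[of 1]] by simp
        then show ?thesis using Suc 0 by (simp add: kappa_def)
      next
        case (Suc k)
        have nk: "n = Suc (Suc k)" using \<open>n = Suc j\<close> Suc by simp
        have IH: "hom_part c k (cos t, sin t) = kappa (u x0) lam k" for t
          using less[of k] nk by auto
        define F2 where "F2 x = hom_part (D1 (D1 c)) k (cos x, sin x) * (sin x)^2
              - 2 * hom_part (D2 (D1 c)) k (cos x, sin x) * sin x * cos x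
              + hom_part (D2 (D2 c)) k (cos x, sin x) * (cos x)^2
              - hom_part (D1 c) (Suc k) (cos x, sin x) * cos x
              - hom_part (D2 c) (Suc k) (cos x, sin x) * sin x" for x
        have d1: "((\<lambda>t. hom_part c (Suc (Suc k)) (cos t, sin t)) has_real_derivative T c (Suc k) x) (at x)" for x
          by (rule f_deriv)
        have d2: "(T c (Suc k) has_real_derivative F2 x) (at x)" for x
          unfolding F2_def by (rule T_deriv)
        have e: "F2 x + (real (Suc (Suc k)))^2 * hom_part c (Suc (Suc k)) (cos x, sin x) = - lam * kappa (u x0) lam k" for x
          using polar_lap[of c k x] hrec[of k x] IH[of x] unfolding F2_def by simp
        have "\<forall>t. hom_part c n (cos t, sin t) = (- lam * kappa (u x0) lam k) / (real (Suc (Suc k)))^2"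
          using ode_const[where f = "\<lambda>t. hom_part c (Suc (Suc k)) (cos t, sin t)" and f' = "T c (Suc k)"
              and f'' = F2 and n = "real (Suc (Suc k))" and K = "- lam * kappa (u x0) lam k" and \<phi> = \<phi> and \<psi> = \<psi>,
              OF _ d1 d2 e Tp Tm sn[of "Suc (Suc k)"]] nk by simp
        then show ?thesis using kappa_step[of lam "u x0" k] nk by simp
      qed
    qed
  qed
  then show ?thesis by simp
qed

theorem theorem2p4:
  fixes \<Omega> :: "(real \<times> real) set" and u :: "real \<times> real \<Rightarrow> real" and lam \<alpha> :: real
    and \<Gamma>p \<Gamma>m :: "(real \<times> real) set" and x0 :: "real \<times> real"
  assumes "open \<Omega>" and "lam > 0"
    and "real_analytic_on \<Omega> u"
    and "(\<lambda>x. (u x)^2) integrable_on \<Omega>"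
    and "\<forall>x\<in>\<Omega>. - laplacian u x = lam * u x"
    and "singular_line \<Omega> u \<Gamma>p" and "singular_line \<Omega> u \<Gamma>m"
    and "x0 \<in> \<Omega>" and "\<Gamma>p \<inter> \<Gamma>m = {x0}"
    and "0 < \<alpha>" and "\<alpha> < 1" and "\<alpha> \<notin> \<rat>"
    and "\<exists>\<phi> rp rm. rp > 0 \<and> rm > 0 \<and>
           \<Gamma>p = closed_segment x0 (x0 + rp *\<^sub>R (cos \<phi>, sin \<phi>)) \<and>
           \<Gamma>m = closed_segment x0 (x0 + rm *\<^sub>R (cos (\<phi> + \<alpha> * 2 * pi), sin (\<phi> + \<alpha> * 2 * pi)))"
  shows "(u x0 \<noteq> 0 \<longrightarrow> vani u x0 = 0) \<and> (u x0 = 0 \<longrightarrow> vani u x0 = \<infinity>) \<and>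
         (u x0 \<noteq> 0 \<longrightarrow> (\<exists>\<delta>>0. \<forall>r \<theta>. 0 \<le> r \<and> r < \<delta> \<longrightarrow>
             u (x0 + r *\<^sub>R (cos \<theta>, sin \<theta>)) = u x0 * bessel_J0 (sqrt lam * r)))"
proof -
  note A = assms
  obtain \<phi> rp rm where ang: "rp > 0" "rm > 0"
    "\<Gamma>p = closed_segment x0 (x0 + rp *\<^sub>R (cos \<phi>, sin \<phi>))"
    "\<Gamma>m = closed_segment x0 (x0 + rm *\<^sub>R (cos (\<phi> + \<alpha> * 2 * pi), sin (\<phi> + \<alpha> * 2 * pi)))"
    using A(13) by blast
  have ex: "\<exists>c r. power_expansion_at u x0 c r" using A(3) A(8) unfolding real_analytic_on_def by blast
  define c0 where "c0 = (SOME c. \<exists>r. power_expansion_at u x0 c r)"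
  obtain R where pe: "power_expansion_at u x0 c0 R"
    using someI_ex[OF ex] unfolding c0_def by blast
  have R: "R > 0" using pe unfolding power_expansion_at_def by auto
  have K: "hom_part c0 n (cos t, sin t) = kappa (u x0) lam n" for n t
    by (rule key[OF pe A(1) A(8) A(5) A(6) A(7) A(12) ang(3) ang(1) ang(4) ang(2)])
  have H: "hom_part c0 n (r * cos t, r * sin t) = r ^ n * kappa (u x0) lam n" for n r t
    using hom_homog[of c0 n r "cos t" "sin t"] K by simp
  have polar: "\<exists>r t. y = (r * cos t, r * sin t)" for y :: "real \<times> real"
  proof (cases "y = 0")
    case True
    then show ?thesis by (intro exI[of _ 0]) (simp add: zero_prod_def)
  next
    case False
    define r where "r = norm y"
    have r: "r > 0" using False by (simp add: r_def)
    have "r = sqrt ((fst y)^2 + (snd y)^2)" unfolding r_def using norm_Pair[of "fst y" "snd y"] by simp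
    then have r2: "r^2 = (fst y)^2 + (snd y)^2" by simp
    have "(fst y / r)^2 + (snd y / r)^2 = r^2 / r^2"
      by (simp only: power_divide add_divide_distrib r2)
    then have "(fst y / r)^2 + (snd y / r)^2 = 1" using r by simp
    then obtain t where "fst y / r = cos t" "snd y / r = sin t" by (rule sincos_total_2pi)
    then have "y = (r * cos t, r * sin t)" using r by (simp add: field_simps prod_eq_iff)
    then show ?thesis by blast
  qed
  have vani_eq: "vani u x0 = (if \<exists>m y. hom_part c0 m y \<noteq> 0
      then enat (LEAST m. \<exists>y. hom_part c0 m y \<noteq> 0) else \<infinity>)"
    by (simp add: vani_def c0_def Let_def)
  have part1: "u x0 \<noteq> 0 \<longrightarrow> vani u x0 = 0"
  proof
    assume u0: "u x0 \<noteq> 0"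
    have h0: "hom_part c0 0 (cos 0, sin 0) \<noteq> 0" using K[of 0 0] u0 by (simp add: kappa_def)
    then have "(LEAST m. \<exists>y. hom_part c0 m y \<noteq> 0) = 0" by (intro Least_eq_0) blast
    then show "vani u x0 = 0" using h0 vani_eq by (auto simp: zero_enat_def)
  qed
  have part2: "u x0 = 0 \<longrightarrow> vani u x0 = \<infinity>"
  proof
    assume u0: "u x0 = 0"
    have "hom_part c0 m y = 0" for m y
    proof -
      obtain r t where "y = (r * cos t, r * sin t)" using polar by blast
      then show ?thesis using H[of m r t] u0 by (simp add: kappa_def)
    qed
    then show "vani u x0 = \<infinity>" using vani_eq by simp
  qed
  have part3: "u x0 \<noteq> 0 \<longrightarrow> (\<exists>\<delta>>0. \<forall>r \<theta>. 0 \<le> r \<and> r < \<delta> \<longrightarrow>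
             u (x0 + r *\<^sub>R (cos \<theta>, sin \<theta>)) = u x0 * bessel_J0 (sqrt lam * r))"
  proof (intro impI exI[of _ R] conjI allI R)
    assume u0: "u x0 \<noteq> 0"
    fix r \<theta> :: real
    assume r: "0 \<le> r \<and> r < R"
    define y where "y = (r * cos \<theta>, r * sin \<theta>)"
    have ny: "norm y < R" using r norm_rcs[of r \<theta>] by (simp add: y_def)
    have "(\<lambda>m. hom_part c0 m y) sums u (x0 + y)" using pe ny unfolding power_expansion_at_def by blast
    then have s0: "(\<lambda>m. kappa (u x0) lam m * r ^ m) sums u (x0 + y)"
      by (simp add: y_def H mult.commute)
    have "(\<lambda>k. kappa (u x0) lam (2 * k) * r ^ (2 * k)) sums u (x0 + y)"
    proof (subst sums_mono_reindex[of "\<lambda>k. 2 * k"])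
      show "strict_mono (\<lambda>k::nat. 2 * k)" by (rule strict_monoI) simp
      show "kappa (u x0) lam n * r ^ n = 0" if "n \<notin> range (\<lambda>k::nat. 2 * k)" for n
      proof -
        have "odd n" using that by (auto elim!: evenE)
        then show ?thesis by (simp add: kappa_def)
      qed
    qed (rule s0)
    moreover have "kappa (u x0) lam (2 * k) * r ^ (2 * k)
        = u x0 * ((-1) ^ k / (fact k)^2 * (sqrt lam * r / 2) ^ (2 * k))" for k
    proof -
      have a: "(sqrt lam * r / 2) ^ (2 * k) = (lam * r^2 / 4) ^ k"
        using A(2) by (simp add: power_mult power_mult_distrib power_divide)
      have b: "(- lam / 4) ^ k * r ^ (2 * k) = (-1) ^ k * (lam * r^2 / 4) ^ k"
      proof -
        have "(- lam / 4) ^ k * r ^ (2 * k) = ((- lam / 4) * r^2) ^ k"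
          by (simp only: power_mult power_mult_distrib)
        also have "\<dots> = ((-1) * (lam * r^2 / 4)) ^ k" by (simp add: field_simps)
        also have "\<dots> = (-1) ^ k * (lam * r^2 / 4) ^ k" by (rule power_mult_distrib)
        finally show ?thesis .
      qed
      have "kappa (u x0) lam (2 * k) * r ^ (2 * k) = u x0 * ((- lam / 4) ^ k * r ^ (2 * k)) / (fact k)^2"
        by (simp add: kappa_def)
      also have "\<dots> = u x0 * ((-1) ^ k * (lam * r^2 / 4) ^ k) / (fact k)^2" by (simp only: b)
      also have "\<dots> = u x0 * ((-1) ^ k / (fact k)^2 * (sqrt lam * r / 2) ^ (2 * k))" by (simp only: a) simp
      finally show ?thesis .
    qed
    ultimately have "(\<lambda>k. u x0 * ((-1) ^ k / (fact k)^2 * (sqrt lam * r / 2) ^ (2 * k))) sums u (x0 + y)"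
      by simp
    then have "(\<lambda>k. u x0 * ((-1) ^ k / (fact k)^2 * (sqrt lam * r / 2) ^ (2 * k)) / u x0) sums (u (x0 + y) / u x0)"
      by (rule sums_divide)
    then have "(\<lambda>k. (-1) ^ k / (fact k)^2 * (sqrt lam * r / 2) ^ (2 * k)) sums (u (x0 + y) / u x0)"
      using u0 by simp
    then have "bessel_J0 (sqrt lam * r) = u (x0 + y) / u x0"
      unfolding bessel_J0_def by (rule sums_unique[symmetric])
    then show "u (x0 + r *\<^sub>R (cos \<theta>, sin \<theta>)) = u x0 * bessel_J0 (sqrt lam * r)"
      using u0 by (simp add: y_def)
  qed
  show ?thesis using part1 part2 part3 by blast
qed

end
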